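(* Let $a,c\in\mathbb{R}$, $b\in(\max\{a,0\},\infty)$, $h\in\mathbb{N}$, $v=(v_1,\dots,v_h)\in\mathbb{R}^h$, $f\in C^1(\mathbb{R},\mathbb{R})$, $p\in C(\mathbb{R},\mathbb{R})$ satisfy for all $x\in\mathbb{R}$ that $f'(x)>0=f(a)$ and $p^{-1}(\mathbb{R}\setminus\{0\})=(a,b)$, with $\mathcal{N}^\theta$, $\mathcal{L}$, $\mathcal{G}$ as in the context. Assume for all $x\in\mathbb{R}$ that $p(x)\ge0$, let $H=\{1,\dots,h\}$, assume $\min_{j\in H}v_j>0$, let $\theta=(\theta_1,\dots,\theta_h)\in\mathcal{G}^{-1}(\{0\})$, and assume that $\theta$ is not a descending critical point of $\mathcal{L}$. Then for all $j\in H$ with $a<\theta_j<b$ and $\mathcal{N}^\theta(\theta_j)<f(\theta_j)$ it holds that $\{i\in H\setminus\{j\}\colon\theta_i=\theta_j\}=\emptyset$.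
   Context: For $\theta=(\theta_1,\dots,\theta_h)\in\mathbb{R}^h$ let $\mathcal{N}^\theta(x)=c+\sum_{j=1}^hv_j\max\{x-\theta_j,0\}$ for $x\in\mathbb{R}$, let $\mathcal{L}(\theta)=\int_{\mathbb{R}}(\mathcal{N}^\theta(x)-f(x))^2p(x)\,\mathrm{d}x$, and let $\mathcal{G}\colon\mathbb{R}^h\to\mathbb{R}^h$ satisfy $\mathcal{G}(\theta)=-(\nabla\mathcal{L})(\theta)$ at every $\theta$ at which $\mathcal{L}$ is differentiable (in this setting $\mathcal{L}\in C^2(\mathbb{R}^h,\mathbb{R})$). For $n\in\mathbb{N}$ and $F\in C^2(\mathbb{R}^n,\mathbb{R})$, a point $x\in\mathbb{R}^n$ is a descending critical point of $F$ if $(\nabla F)(x)=0$ and there exists $u\in\mathbb{R}^n$ with $\langle u,((\operatorname{Hess}F)(x))u\rangle<0$. *)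

theory Defs
  imports "HOL-Analysis.Analysis"
begin

text \<open>Shallow ReLU network with one hidden layer; parameters indexed by the finite type 'n,
  so H = UNIV and h = CARD('n).\<close>
definition NN :: "real \<Rightarrow> real^'n \<Rightarrow> real^'n \<Rightarrow> real \<Rightarrow> real" where
  "NN c v \<theta> x = c + (\<Sum>j\<in>UNIV. v$j * max (x - \<theta>$j) 0)"

definition lossL :: "real \<Rightarrow> real^'n \<Rightarrow> (real \<Rightarrow> real) \<Rightarrow> (real \<Rightarrow> real) \<Rightarrow> real^'n \<Rightarrow> real" where
  "lossL c v f p \<theta> = integral UNIV (\<lambda>x. (NN c v \<theta> x - f x)^2 * p x)"

definition partial :: "'n \<Rightarrow> (real^'n \<Rightarrow> real) \<Rightarrow> real^'n \<Rightarrow> real" where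
  "partial i F x = deriv (\<lambda>t. F (x + t *\<^sub>R axis i 1)) 0"

definition grad :: "(real^'n \<Rightarrow> real) \<Rightarrow> real^'n \<Rightarrow> real^'n" where
  "grad F x = (\<chi> i. partial i F x)"

definition Hess :: "(real^'n \<Rightarrow> real) \<Rightarrow> real^'n \<Rightarrow> real^'n^'n" where
  "Hess F x = (\<chi> i j. partial i (partial j F) x)"

definition descending_critical_point :: "(real^'n \<Rightarrow> real) \<Rightarrow> real^'n \<Rightarrow> bool" where
  "descending_critical_point F x \<longleftrightarrow>
     grad F x = 0 \<and> (\<exists>u. u \<bullet> (Hess F x *v u) < 0)"

end

theory Submission
  imports Defs
begin


lemma ind_int:
  fixes g :: "real \<Rightarrow> real"
  assumes "continuous_on {a..b} g"
  shows "(\<lambda>x. of_bool (s \<le> x) * g x) integrable_on {a..b}"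
    and "integral {a..b} (\<lambda>x. of_bool (s \<le> x) * g x) = integral {max a s..b} g"
proof -
  have e: "(\<lambda>x. of_bool (s \<le> x) * g x) = (\<lambda>x. if x \<in> {s..} then g x else 0)" by auto
  have i: "{s..} \<inter> {a..b} = {max a s..b}" by auto
  have "continuous_on {max a s..b} g" using assms by (rule continuous_on_subset) auto
  then have "g integrable_on {max a s..b}" by (rule integrable_continuous_real)
  then show "(\<lambda>x. of_bool (s \<le> x) * g x) integrable_on {a..b}"
    unfolding e integrable_restrict_Int i .
  show "integral {a..b} (\<lambda>x. of_bool (s \<le> x) * g x) = integral {max a s..b} g"
    unfolding e integral_restrict_Int i ..
qed

lemma bump_int:
  fixes K \<delta> s :: real
  assumes "K \<ge> 0" "\<delta> \<ge> 0"
  shows "(\<lambda>x. K * of_bool (s - \<delta> \<le> x \<and> x \<le> s + \<delta>)) integrable_on {a..b}"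
    and "integral {a..b} (\<lambda>x. K * of_bool (s - \<delta> \<le> x \<and> x \<le> s + \<delta>)) \<le> 2 * K * \<delta>"
proof -
  have e: "(\<lambda>x. K * of_bool (s - \<delta> \<le> x \<and> x \<le> s + \<delta>)) = (\<lambda>x. if x \<in> {s-\<delta>..s+\<delta>} then K else 0)" by auto
  have i: "{s-\<delta>..s+\<delta>} \<inter> {a..b} = {max a (s-\<delta>)..min b (s+\<delta>)}" by auto
  show "(\<lambda>x. K * of_bool (s - \<delta> \<le> x \<and> x \<le> s + \<delta>)) integrable_on {a..b}"
    unfolding e integrable_restrict_Int i by (intro integrable_continuous_real continuous_on_const)
  have "measure lborel {max a (s-\<delta>)..min b (s+\<delta>)} \<le> 2 * \<delta>"
    by (cases "max a (s-\<delta>) \<le> min b (s+\<delta>)") (use assms in \<open>auto simp: content_real\<close>)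
  then have "K * measure lborel {max a (s-\<delta>)..min b (s+\<delta>)} \<le> K * (2 * \<delta>)"
    using assms(1) by (rule mult_left_mono)
  then show "integral {a..b} (\<lambda>x. K * of_bool (s - \<delta> \<le> x \<and> x \<le> s + \<delta>)) \<le> 2 * K * \<delta>"
    unfolding e integral_restrict_Int i by (simp add: mult.commute mult.left_commute)
qed

lemma quad_deriv:
  fixes F :: "'a::real_normed_vector \<Rightarrow> 'b::real_normed_vector"
  assumes "bounded_linear F'" "0 < \<delta>"
    and "\<And>y. norm (y - x) < \<delta> \<Longrightarrow> norm (F y - F x - F' (y - x)) \<le> C * (norm (y - x))\<^sup>2"
  shows "(F has_derivative F') (at x)"
  unfolding has_derivative_at_alt
proof (intro conjI allI impI assms(1))
  fix e :: real assume e: "e > 0"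
  define d where "d = min \<delta> (e / (\<bar>C\<bar> + 1))"
  have d: "d > 0" using e assms(2) by (simp add: d_def)
  show "\<exists>d>0. \<forall>y. norm (y - x) < d \<longrightarrow> norm (F y - F x - F' (y - x)) \<le> e * norm (y - x)"
  proof (intro exI[of _ d] conjI allI impI d)
    fix y assume y: "norm (y - x) < d"
    let ?n = "norm (y - x)"
    have "norm (F y - F x - F' (y - x)) \<le> C * ?n\<^sup>2" using y assms(3) by (simp add: d_def)
    also have "\<dots> \<le> (\<bar>C\<bar> + 1) * ?n * ?n" unfolding power2_eq_square mult.assoc by (rule mult_right_mono) auto
    also have "\<dots> \<le> e * ?n"
    proof -
      have "(\<bar>C\<bar> + 1) * ?n \<le> e" using y d_def
        by (smt (verit) divide_pos_pos e less_divide_eq mult.commute norm_ge_zero min.strict_boundedE)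
      then show ?thesis by (simp add: mult_right_mono)
    qed
    finally show "norm (F y - F x - F' (y - x)) \<le> e * ?n" .
  qed
qed

lemma quad_deriv_real:
  fixes F :: "real \<Rightarrow> real"
  assumes "0 < \<delta>" "\<And>t. \<bar>t\<bar> < \<delta> \<Longrightarrow> \<bar>F t - F 0 - t * D\<bar> \<le> C * t\<^sup>2"
  shows "(F has_real_derivative D) (at 0)"
  unfolding has_field_derivative_def
  by (rule quad_deriv[where \<delta>=\<delta> and C=C]) (use assms in \<open>auto simp: bounded_linear_mult_right mult.commute\<close>)



lemma rho_diff:
  fixes x s t :: real
  shows "\<bar>max (x - s - t) 0 - max (x - s) 0 + t * of_bool (s \<le> x)\<bar>
     \<le> \<bar>t\<bar> * of_bool (s - \<bar>t\<bar> \<le> x \<and> x \<le> s + \<bar>t\<bar>)"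
  by (cases "s \<le> x"; cases "s - \<bar>t\<bar> \<le> x \<and> x \<le> s + \<bar>t\<bar>") (auto simp: max_def abs_if split: if_splits)

lemma bump_mono:
  fixes x s t n :: real
  assumes "\<bar>t\<bar> \<le> n"
  shows "\<bar>t\<bar> * of_bool (s - \<bar>t\<bar> \<le> x \<and> x \<le> s + \<bar>t\<bar>) \<le> n * of_bool (s - n \<le> x \<and> x \<le> s + n)"
  using assms by (cases "s - \<bar>t\<bar> \<le> x \<and> x \<le> s + \<bar>t\<bar>") auto

lemma NN_add:
  "NN c v (\<eta> + h) x - NN c v \<eta> x = (\<Sum>l\<in>UNIV. v$l * (max (x - \<eta>$l - h$l) 0 - max (x - \<eta>$l) 0))"
  unfolding NN_def by (simp add: sum_subtractf right_diff_distrib algebra_simps)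

locale setting =
  fixes a b c :: real and v :: "real^'n" and f p :: "real \<Rightarrow> real"
  assumes ab: "a < b" and fc: "continuous_on UNIV f" and pc: "continuous_on UNIV p"
    and p0: "\<And>x. x \<notin> {a<..<b} \<Longrightarrow> p x = 0" and pnn: "\<And>x. p x \<ge> 0"
begin

definition R :: "real^'n \<Rightarrow> real \<Rightarrow> real" where "R \<eta> x = NN c v \<eta> x - f x"

definition d :: "'n \<Rightarrow> real^'n \<Rightarrow> real" where
  "d l \<eta> = -2 * v$l * integral {a..b} (\<lambda>x. of_bool (\<eta>$l \<le> x) * (R \<eta> x * p x))"

lemma R_cont: "continuous_on S (R \<eta>)"
proof -
  have "continuous_on UNIV f" by (rule fc)
  then have "continuous_on S f" by (rule continuous_on_subset) auto
  then show ?thesis unfolding R_def[abs_def] NN_def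
    by (intro continuous_intros)
qed

lemma p_cont: "continuous_on S p"
  using pc by (rule continuous_on_subset) auto

lemma Rp_cont: "continuous_on S (\<lambda>x. R \<eta> x * p x)"
  by (intro continuous_intros R_cont p_cont)

lemma L_eq: "lossL c v f p \<eta> = integral {a..b} (\<lambda>x. (R \<eta> x)\<^sup>2 * p x)"
proof -
  have "(\<lambda>x. (NN c v \<eta> x - f x)\<^sup>2 * p x) = (\<lambda>x. if x \<in> {a..b} then (R \<eta> x)\<^sup>2 * p x else 0)"
  proof
    fix x show "(NN c v \<eta> x - f x)\<^sup>2 * p x = (if x \<in> {a..b} then (R \<eta> x)\<^sup>2 * p x else 0)"
      using p0[of x] by (cases "x \<in> {a<..<b}") (auto simp: R_def)
  qed
  then show ?thesis unfolding lossL_def by (simp only: integral_restrict_UNIV)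
qed

lemma Mp_ex: obtains Mp where "Mp \<ge> 0" "\<And>x. p x \<le> Mp"
proof -
  obtain B where B: "B \<ge> 0" "\<And>x. x \<in> {a..b} \<Longrightarrow> norm (p x) \<le> B"
    using continuous_on_compact_bound[OF compact_Icc p_cont] by blast
  have "p x \<le> B" for x
    using B(1) B(2)[of x] p0[of x] by (cases "x \<in> {a..b}") auto
  then show ?thesis using that B by blast
qed

end


lemma imult: "(f::'a::euclidean_space \<Rightarrow> real) integrable_on S \<Longrightarrow> (\<lambda>x. c * f x) integrable_on S"
  using integrable_cmul[of f S c] by simp

context setting begin

lemma int_ind: "(\<lambda>x. of_bool (s \<le> x) * (R \<eta> x * p x)) integrable_on {a..b}"
  by (rule ind_int(1)) (rule Rp_cont)

lemma L_deriv: "(lossL c v f p has_derivative (\<lambda>h. \<Sum>l\<in>UNIV. h$l * d l \<eta>)) (at \<eta>)"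
proof -
  obtain M1 where M1: "M1 \<ge> 0" "\<And>x. x \<in> {a..b} \<Longrightarrow> norm (R \<eta> x * p x) \<le> M1"
    using continuous_on_compact_bound[OF compact_Icc Rp_cont] by blast
  obtain Mp where Mp: "Mp \<ge> 0" "\<And>x. p x \<le> Mp" using Mp_ex by blast
  define V where "V = (\<Sum>l\<in>UNIV. \<bar>v$l\<bar>)"
  have V0: "V \<ge> 0" unfolding V_def by (simp add: sum_nonneg)
  define C where "C = 4*M1*V + V^2*Mp*(b-a)"
  let ?D = "\<lambda>h. \<Sum>l\<in>UNIV. h$l * d l \<eta>"
  have bl: "bounded_linear ?D"
    by (intro bounded_linear_sum bounded_linear_mult_left[THEN bounded_linear_compose] bounded_linear_vec_nth)
  show ?thesis
  proof (rule quad_deriv[OF bl zero_less_one, where C=C])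
    fix y assume "norm (y - \<eta>) < 1"
    define h where "h = y - \<eta>"
    then have y: "y = \<eta> + h" by simp
    define n where "n = norm h"
    have n0: "n \<ge> 0" unfolding n_def by simp
    define r where "r x = (\<Sum>l\<in>UNIV. v$l * (max (x - \<eta>$l - h$l) 0 - max (x - \<eta>$l) 0))" for x
    define E where "E l x = max (x - \<eta>$l - h$l) 0 - max (x - \<eta>$l) 0 + h$l * of_bool (\<eta>$l \<le> x)" for l x
    have Ry: "R y x = R \<eta> x + r x" for x
      using NN_add[of c v \<eta> h x] unfolding R_def r_def y by (simp add: algebra_simps)
    have SE: "(\<Sum>l\<in>UNIV. v$l * E l x) = r x + (\<Sum>l\<in>UNIV. h$l * (v$l * of_bool (\<eta>$l \<le> x)))" for x
      unfolding E_def r_def sum.distrib[symmetric] by (intro sum.cong) (auto simp: algebra_simps)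
    define e where "e x = (R y x)^2 * p x - (R \<eta> x)^2 * p x
       + (\<Sum>l\<in>UNIV. h$l * (2 * v$l * (of_bool (\<eta>$l \<le> x) * (R \<eta> x * p x))))" for x
    have e_alt: "e x = 2 * (R \<eta> x * p x) * (\<Sum>l\<in>UNIV. v$l * E l x) + (r x)^2 * p x" for x
    proof -
      have "(\<Sum>l\<in>UNIV. h$l * (2 * v$l * (of_bool (\<eta>$l \<le> x) * (R \<eta> x * p x))))
          = 2 * (R \<eta> x * p x) * (\<Sum>l\<in>UNIV. h$l * (v$l * of_bool (\<eta>$l \<le> x)))"
        by (simp add: sum_distrib_left algebra_simps)
      then show ?thesis unfolding e_def SE Ry by (simp add: algebra_simps power2_eq_square)
    qed
    have icont: "\<And>q::real\<Rightarrow>real. continuous_on {a..b} q \<Longrightarrow> q integrable_on {a..b}"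
      by (rule integrable_continuous_real)
    have i1: "(\<lambda>x. (R y x)^2 * p x) integrable_on {a..b}"
      by (intro icont continuous_intros R_cont p_cont)
    have i2: "(\<lambda>x. (R \<eta> x)^2 * p x) integrable_on {a..b}"
      by (intro icont continuous_intros R_cont p_cont)
    have i3: "(\<lambda>x. \<Sum>l\<in>UNIV. h$l * (2 * v$l * (of_bool (\<eta>$l \<le> x) * (R \<eta> x * p x)))) integrable_on {a..b}"
      by (intro integrable_sum finite imult int_ind)
    have ie: "e integrable_on {a..b}"
      unfolding e_def[abs_def] by (intro integrable_add integrable_diff i1 i2 i3)
    have "?D h = - integral {a..b} (\<lambda>x. \<Sum>l\<in>UNIV. h$l * (2 * v$l * (of_bool (\<eta>$l \<le> x) * (R \<eta> x * p x))))"
      unfolding d_def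
      by (subst integral_sum) (auto intro!: imult int_ind simp: sum_negf[symmetric])
    then have eq: "lossL c v f p y - lossL c v f p \<eta> - ?D (y - \<eta>) = integral {a..b} e"
      unfolding L_eq h_def[symmetric] e_def[abs_def]
      by (simp add: integral_add integral_diff i1 i2 i3 integrable_diff)
    define g where "g x = (\<Sum>l\<in>UNIV. (2*M1*\<bar>v$l\<bar>*n) * of_bool (\<eta>$l - n \<le> x \<and> x \<le> \<eta>$l + n)) + V^2*n^2*Mp" for x
    have bound: "norm (e x) \<le> g x" if x: "x \<in> {a..b}" for x
    proof -
      have Sb: "\<bar>\<Sum>l\<in>UNIV. v$l * E l x\<bar> \<le> (\<Sum>l\<in>UNIV. \<bar>v$l\<bar> * (n * of_bool (\<eta>$l - n \<le> x \<and> x \<le> \<eta>$l + n)))"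
      proof -
        have "\<bar>\<Sum>l\<in>UNIV. v$l * E l x\<bar> \<le> (\<Sum>l\<in>UNIV. \<bar>v$l * E l x\<bar>)" by (rule sum_abs)
        also have "\<dots> \<le> (\<Sum>l\<in>UNIV. \<bar>v$l\<bar> * (n * of_bool (\<eta>$l - n \<le> x \<and> x \<le> \<eta>$l + n)))"
        proof (rule sum_mono)
          fix l
          have "\<bar>E l x\<bar> \<le> \<bar>h$l\<bar> * of_bool (\<eta>$l - \<bar>h$l\<bar> \<le> x \<and> x \<le> \<eta>$l + \<bar>h$l\<bar>)"
            unfolding E_def by (rule rho_diff)
          also have "\<dots> \<le> n * of_bool (\<eta>$l - n \<le> x \<and> x \<le> \<eta>$l + n)"
            by (rule bump_mono) (simp add: n_def component_le_norm_cart)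
          finally show "\<bar>v$l * E l x\<bar> \<le> \<bar>v$l\<bar> * (n * of_bool (\<eta>$l - n \<le> x \<and> x \<le> \<eta>$l + n))"
            by (simp add: abs_mult mult_left_mono)
        qed
        finally show ?thesis .
      qed
      have rb: "\<bar>r x\<bar> \<le> V * n"
      proof -
        have "\<bar>r x\<bar> \<le> (\<Sum>l\<in>UNIV. \<bar>v$l * (max (x - \<eta>$l - h$l) 0 - max (x - \<eta>$l) 0)\<bar>)"
          unfolding r_def by (rule sum_abs)
        also have "\<dots> \<le> (\<Sum>l\<in>UNIV. \<bar>v$l\<bar> * n)"
        proof (rule sum_mono)
          fix l
          have "\<bar>max (x - \<eta>$l - h$l) 0 - max (x - \<eta>$l) 0\<bar> \<le> \<bar>h$l\<bar>" by (simp add: max_def abs_if)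
          also have "\<dots> \<le> n" by (simp add: n_def component_le_norm_cart)
          finally show "\<bar>v$l * (max (x - \<eta>$l - h$l) 0 - max (x - \<eta>$l) 0)\<bar> \<le> \<bar>v$l\<bar> * n"
            by (simp add: abs_mult mult_left_mono)
        qed
        finally show ?thesis by (simp add: V_def sum_distrib_right)
      qed
      then have "(r x)^2 \<le> (V*n)^2"
        by (metis abs_ge_zero power2_abs power_mono)
      then have r2: "(r x)^2 * p x \<le> V^2*n^2*Mp"
        using Mp pnn[of x] by (simp add: power_mult_distrib) (meson mult_mono zero_le_power2 order_trans)
      have "norm (e x) \<le> 2 * \<bar>R \<eta> x * p x\<bar> * \<bar>\<Sum>l\<in>UNIV. v$l * E l x\<bar> + (r x)^2 * p x"
        unfolding e_alt using pnn[of x] by (simp add: abs_mult abs_triangle_ineq[THEN order_trans])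
      also have "\<dots> \<le> 2 * M1 * (\<Sum>l\<in>UNIV. \<bar>v$l\<bar> * (n * of_bool (\<eta>$l - n \<le> x \<and> x \<le> \<eta>$l + n))) + V^2*n^2*Mp"
      proof -
        have "\<bar>R \<eta> x * p x\<bar> * \<bar>\<Sum>l\<in>UNIV. v$l * E l x\<bar> \<le> M1 * (\<Sum>l\<in>UNIV. \<bar>v$l\<bar> * (n * of_bool (\<eta>$l - n \<le> x \<and> x \<le> \<eta>$l + n)))"
          by (rule mult_mono) (use M1(1) M1(2)[OF x] Sb in auto)
        then show ?thesis using r2 by linarith
      qed
      also have "\<dots> = g x" unfolding g_def by (simp add: sum_distrib_left algebra_simps)
      finally show ?thesis .
    qed
    have ig: "g integrable_on {a..b}"
      unfolding g_def[abs_def]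
      by (intro integrable_add integrable_sum finite bump_int(1) integrable_continuous_real continuous_on_const)
         (use M1 n0 in auto)
    have "integral {a..b} g \<le> (\<Sum>l\<in>UNIV. 2*(2*M1*\<bar>v$l\<bar>*n)*n) + V^2*n^2*Mp*(b-a)"
    proof -
      have ib: "(\<lambda>x. (2*M1*\<bar>v$l\<bar>*n) * of_bool (\<eta>$l - n \<le> x \<and> x \<le> \<eta>$l + n)) integrable_on {a..b}" for l
        by (rule bump_int(1)) (use M1 n0 in auto)
      have "integral {a..b} g = (\<Sum>l\<in>UNIV. integral {a..b} (\<lambda>x. (2*M1*\<bar>v$l\<bar>*n) * of_bool (\<eta>$l - n \<le> x \<and> x \<le> \<eta>$l + n)))
          + V^2*n^2*Mp*(b-a)"
        unfolding g_def[abs_def]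
        apply (subst integral_add)
          apply (rule integrable_sum, simp, rule ib)
         apply (rule integrable_continuous_real, rule continuous_on_const)
        apply (subst integral_sum, simp, rule ib)
        using ab by (simp add: content_real)
      also have "\<dots> \<le> (\<Sum>l\<in>UNIV. 2*(2*M1*\<bar>v$l\<bar>*n)*n) + V^2*n^2*Mp*(b-a)"
        by (intro add_right_mono sum_mono bump_int(2)) (use M1 n0 in auto)
      finally show ?thesis .
    qed
    also have "\<dots> = C * n^2" unfolding C_def V_def by (simp add: sum_distrib_left sum_distrib_right algebra_simps power2_eq_square)
    finally have "norm (integral {a..b} e) \<le> C * n^2"
      using integral_norm_bound_integral[OF ie ig bound] by linarith
    then show "norm (lossL c v f p y - lossL c v f p \<eta> - ?D (y - \<eta>)) \<le> C * (norm (y - \<eta>))\<^sup>2"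
      unfolding eq n_def h_def .
  qed
qed

end


lemma NN_upd:
  "NN c v (\<theta> + t *\<^sub>R axis k 1) x = NN c v \<theta> x + v$k * (max (x - \<theta>$k - t) 0 - max (x - \<theta>$k) 0)"
proof -
  have "NN c v (\<theta> + t *\<^sub>R axis k 1) x - NN c v \<theta> x
     = (\<Sum>l\<in>UNIV. v$l * (max (x - \<theta>$l - (t *\<^sub>R axis k 1)$l) 0 - max (x - \<theta>$l) 0))"
    by (rule NN_add)
  also have "\<dots> = (\<Sum>l\<in>UNIV. if l = k then v$k * (max (x - \<theta>$k - t) 0 - max (x - \<theta>$k) 0) else 0)"
    by (intro sum.cong) (auto simp: axis_def)
  also have "\<dots> = v$k * (max (x - \<theta>$k - t) 0 - max (x - \<theta>$k) 0)" by simp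
  finally show ?thesis by simp
qed

lemma ind_bump2:
  fixes x s t :: real
  shows "\<bar>of_bool (s + t \<le> x) * (max (x - s - t) 0 - max (x - s) 0) + t * of_bool (s \<le> x)\<bar>
     \<le> \<bar>t\<bar> * of_bool (s - \<bar>t\<bar> \<le> x \<and> x \<le> s + \<bar>t\<bar>)"
  by (cases "s \<le> x"; cases "s + t \<le> x"; cases "s - \<bar>t\<bar> \<le> x \<and> x \<le> s + \<bar>t\<bar>") (auto simp: max_def abs_if split: if_splits)

context setting begin

lemma partial_L: "partial l (lossL c v f p) \<eta> = d l \<eta>"
proof -
  have 1: "((\<lambda>t::real. \<eta> + t *\<^sub>R axis l 1) has_derivative (\<lambda>t. t *\<^sub>R axis l 1)) (at 0)"
    by (auto intro!: derivative_eq_intros)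
  have 2: "(lossL c v f p has_derivative (\<lambda>h. \<Sum>m\<in>UNIV. h$m * d m \<eta>)) (at (\<eta> + 0 *\<^sub>R axis l 1))"
    using L_deriv by simp
  have "((\<lambda>t. lossL c v f p (\<eta> + t *\<^sub>R axis l 1)) has_derivative
      (\<lambda>t. \<Sum>m\<in>UNIV. (t *\<^sub>R axis l (1::real))$m * d m \<eta>)) (at 0)"
    using has_derivative_compose[OF 1 2] by simp
  moreover have "(\<lambda>t. \<Sum>m\<in>UNIV. (t *\<^sub>R axis l (1::real))$m * d m \<eta>) = (*) (d l \<eta>)"
  proof
    fix t :: real
    have "(\<Sum>m\<in>UNIV. (t *\<^sub>R axis l (1::real))$m * d m \<eta>) = (\<Sum>m\<in>UNIV. if m = l then t * d l \<eta> else 0)"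
      by (intro sum.cong) (auto simp: axis_def)
    then show "(\<Sum>m\<in>UNIV. (t *\<^sub>R axis l (1::real))$m * d m \<eta>) = d l \<eta> * t" by simp
  qed
  ultimately have "((\<lambda>t. lossL c v f p (\<eta> + t *\<^sub>R axis l 1)) has_real_derivative d l \<eta>) (at 0)"
    by (simp add: has_field_derivative_def)
  then show ?thesis unfolding partial_def by (rule DERIV_imp_deriv)
qed

lemma partial_L_fun: "partial l (lossL c v f p) = d l"
  using partial_L by blast

lemma R_upd: "R (\<theta> + t *\<^sub>R axis k 1) x = R \<theta> x + v$k * (max (x - \<theta>$k - t) 0 - max (x - \<theta>$k) 0)"
  unfolding R_def NN_upd by simp

definition P :: "real \<Rightarrow> real" where "P s = integral {a..b} (\<lambda>x. of_bool (s \<le> x) * p x)"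

lemma int_indp: "(\<lambda>x. of_bool (s \<le> x) * p x) integrable_on {a..b}"
  by (rule ind_int(1)) (rule p_cont)

lemma H_off:
  assumes "k \<noteq> l" "\<theta>$k = s" "\<theta>$l = s"
  shows "((\<lambda>t. d l (\<theta> + t *\<^sub>R axis k 1)) has_real_derivative (2 * v$l * v$k * P s)) (at 0)"
proof -
  obtain Mp where Mp: "Mp \<ge> 0" "\<And>x. p x \<le> Mp" using Mp_ex by blast
  show ?thesis
  proof (rule quad_deriv_real[OF zero_less_one, where C="4 * \<bar>v$l\<bar> * \<bar>v$k\<bar> * Mp"])
    fix t :: real
    have lk: "(\<theta> + t *\<^sub>R axis k 1)$l = s" using assms by (simp add: axis_def)
    define E where "E x = max (x - s - t) 0 - max (x - s) 0 + t * of_bool (s \<le> x)" for x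
    have pw: "of_bool (s \<le> x) * (R (\<theta> + t *\<^sub>R axis k 1) x * p x) - of_bool (s \<le> x) * (R \<theta> x * p x)
        + t * v$k * (of_bool (s \<le> x) * p x) = v$k * (of_bool (s \<le> x) * p x * E x)" for x
      unfolding R_upd E_def assms(2) by (cases "s \<le> x") (auto simp: algebra_simps)
    have i1: "(\<lambda>x. of_bool (s \<le> x) * (R (\<theta> + t *\<^sub>R axis k 1) x * p x)) integrable_on {a..b}"
      by (rule int_ind)
    have i2: "(\<lambda>x. of_bool (s \<le> x) * (R \<theta> x * p x)) integrable_on {a..b}"
      by (rule int_ind)
    have i3: "(\<lambda>x. t * v$k * (of_bool (s \<le> x) * p x)) integrable_on {a..b}"
      by (intro imult int_indp)
    have sp: "integral {a..b} (\<lambda>x. of_bool (s \<le> x) * (R (\<theta> + t *\<^sub>R axis k 1) x * p x)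
            - of_bool (s \<le> x) * (R \<theta> x * p x) + t * v$k * (of_bool (s \<le> x) * p x))
       = integral {a..b} (\<lambda>x. of_bool (s \<le> x) * (R (\<theta> + t *\<^sub>R axis k 1) x * p x))
         - integral {a..b} (\<lambda>x. of_bool (s \<le> x) * (R \<theta> x * p x)) + t * v$k * P s"
      by (subst integral_add[OF integrable_diff[OF i1 i2] i3], subst integral_diff[OF i1 i2]) (simp add: P_def)
    have "d l (\<theta> + t *\<^sub>R axis k 1) - d l (\<theta> + 0 *\<^sub>R axis k 1) - t * (2 * v$l * v$k * P s)
      = -2 * v$l * integral {a..b} (\<lambda>x. of_bool (s \<le> x) * (R (\<theta> + t *\<^sub>R axis k 1) x * p x)
            - of_bool (s \<le> x) * (R \<theta> x * p x) + t * v$k * (of_bool (s \<le> x) * p x))"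
      unfolding sp unfolding d_def lk using assms(3) by (simp add: algebra_simps)
    also have "\<dots> = -2 * v$l * v$k * integral {a..b} (\<lambda>x. of_bool (s \<le> x) * p x * E x)"
      unfolding pw by simp
    finally have eq: "d l (\<theta> + t *\<^sub>R axis k 1) - d l (\<theta> + 0 *\<^sub>R axis k 1) - t * (2 * v$l * v$k * P s)
       = -2 * v$l * v$k * integral {a..b} (\<lambda>x. of_bool (s \<le> x) * p x * E x)" .
    have iE: "(\<lambda>x. of_bool (s \<le> x) * p x * E x) integrable_on {a..b}"
    proof -
      have "(\<lambda>x. of_bool (s \<le> x) * p x * E x) = (\<lambda>x. of_bool (s \<le> x) * ((max (x - s - t) 0 - max (x - s) 0) * p x) + t * (of_bool (s \<le> x) * p x))"
        unfolding E_def by (auto simp: algebra_simps)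
      moreover have "(\<lambda>x. of_bool (s \<le> x) * ((max (x - s - t) 0 - max (x - s) 0) * p x)) integrable_on {a..b}"
        by (rule ind_int(1)) (intro continuous_intros p_cont)
      ultimately show ?thesis by (simp add: integrable_add imult int_indp)
    qed
    have ib: "(\<lambda>x. Mp * \<bar>t\<bar> * of_bool (s - \<bar>t\<bar> \<le> x \<and> x \<le> s + \<bar>t\<bar>)) integrable_on {a..b}"
      by (rule bump_int(1)) (use Mp in auto)
    have "norm (integral {a..b} (\<lambda>x. of_bool (s \<le> x) * p x * E x))
        \<le> integral {a..b} (\<lambda>x. Mp * \<bar>t\<bar> * of_bool (s - \<bar>t\<bar> \<le> x \<and> x \<le> s + \<bar>t\<bar>))"
    proof (rule integral_norm_bound_integral[OF iE ib])
      fix x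
      have "\<bar>E x\<bar> \<le> \<bar>t\<bar> * of_bool (s - \<bar>t\<bar> \<le> x \<and> x \<le> s + \<bar>t\<bar>)"
        unfolding E_def by (rule rho_diff)
      moreover have "\<bar>of_bool (s \<le> x) * p x\<bar> \<le> Mp" using Mp pnn[of x] by auto
      ultimately have "\<bar>of_bool (s \<le> x) * p x\<bar> * \<bar>E x\<bar> \<le> Mp * (\<bar>t\<bar> * of_bool (s - \<bar>t\<bar> \<le> x \<and> x \<le> s + \<bar>t\<bar>))"
        by (intro mult_mono) (use Mp in auto)
      then show "norm (of_bool (s \<le> x) * p x * E x) \<le> Mp * \<bar>t\<bar> * of_bool (s - \<bar>t\<bar> \<le> x \<and> x \<le> s + \<bar>t\<bar>)"
        by (simp add: abs_mult mult.assoc)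
    qed
    also have "\<dots> \<le> 2 * (Mp * \<bar>t\<bar>) * \<bar>t\<bar>"
      by (rule bump_int(2)) (use Mp in auto)
    finally have "\<bar>integral {a..b} (\<lambda>x. of_bool (s \<le> x) * p x * E x)\<bar> \<le> 2 * Mp * t\<^sup>2"
      by (simp add: power2_eq_square)
    then have "\<bar>2 * v$l * v$k\<bar> * \<bar>integral {a..b} (\<lambda>x. of_bool (s \<le> x) * p x * E x)\<bar> \<le> \<bar>2 * v$l * v$k\<bar> * (2 * Mp * t\<^sup>2)"
      by (rule mult_left_mono) simp
    then show "\<bar>d l (\<theta> + t *\<^sub>R axis k 1) - d l (\<theta> + 0 *\<^sub>R axis k 1) - t * (2 * v$l * v$k * P s)\<bar>
        \<le> 4 * \<bar>v$l\<bar> * \<bar>v$k\<bar> * Mp * t\<^sup>2"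
      unfolding eq by (simp add: abs_mult)
  qed
qed

lemma H_diag:
  assumes "\<theta>$k = s" "a < s" "s < b"
  shows "((\<lambda>t. d k (\<theta> + t *\<^sub>R axis k 1)) has_real_derivative
           (2 * v$k * (R \<theta> s * p s) + 2 * (v$k)^2 * P s)) (at 0)"
proof -
  obtain Mp where Mp: "Mp \<ge> 0" "\<And>x. p x \<le> Mp" using Mp_ex by blast
  define T1 where "T1 t = integral {a..b} (\<lambda>x. of_bool (s + t \<le> x) * (R \<theta> x * p x))" for t
  define T2 where "T2 t = integral {a..b} (\<lambda>x. of_bool (s + t \<le> x) * ((max (x - s - t) 0 - max (x - s) 0) * p x))" for t
  have kk: "(\<theta> + t *\<^sub>R axis k 1)$k = s + t" for t using assms(1) by (simp add: axis_def)
  have i2: "(\<lambda>x. of_bool (s + t \<le> x) * ((max (x - s - t) 0 - max (x - s) 0) * p x)) integrable_on {a..b}" for t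
    by (rule ind_int(1)) (intro continuous_intros p_cont)
  have F: "d k (\<theta> + t *\<^sub>R axis k 1) = -2 * v$k * (T1 t + v$k * T2 t)" for t
  proof -
    have "(\<lambda>x. of_bool (s + t \<le> x) * (R (\<theta> + t *\<^sub>R axis k 1) x * p x))
       = (\<lambda>x. of_bool (s + t \<le> x) * (R \<theta> x * p x) + v$k * (of_bool (s + t \<le> x) * ((max (x - s - t) 0 - max (x - s) 0) * p x)))"
      unfolding R_upd assms(1) by (auto simp: algebra_simps)
    then show ?thesis unfolding d_def kk T1_def T2_def
      by (simp add: integral_add int_ind imult i2)
  qed
  have D1: "(T1 has_real_derivative -(R \<theta> s * p s)) (at 0)"
  proof -
    define G where "G u = integral {u..b} (\<lambda>x. R \<theta> x * p x)" for u
    have "(G has_real_derivative -(R \<theta> s * p s)) (at s within {a..b})"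
      unfolding G_def by (rule integral_has_real_derivative') (use assms Rp_cont in auto)
    moreover have "at s within {a..b} = at s"
      by (rule at_within_interior) (use assms in simp)
    ultimately have "(G has_real_derivative -(R \<theta> s * p s)) (at (0 + s))" by simp
    then have "((\<lambda>t. G (t + s)) has_real_derivative -(R \<theta> s * p s)) (at 0)"
      by (simp only: DERIV_shift)
    then show ?thesis
    proof (rule has_field_derivative_transform_within_open[where S="{a-s<..}"])
      fix t assume "t \<in> {a-s<..}"
      then have "max a (s + t) = t + s" by auto
      then show "G (t + s) = T1 t" unfolding G_def T1_def
        by (subst ind_int(2)) (auto intro: Rp_cont)
    qed (use assms in auto)
  qed
  have D2: "(T2 has_real_derivative - P s) (at 0)"
  proof (rule quad_deriv_real[OF zero_less_one, where C="2 * Mp"])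
    fix t :: real
    have T20: "T2 0 = 0" unfolding T2_def by simp
    have "T2 t - T2 0 - t * - P s = integral {a..b} (\<lambda>x. of_bool (s + t \<le> x) * ((max (x - s - t) 0 - max (x - s) 0) * p x) + t * (of_bool (s \<le> x) * p x))"
      unfolding T20 T2_def P_def by (simp add: integral_add i2 imult int_indp)
    also have "\<dots> = integral {a..b} (\<lambda>x. p x * (of_bool (s + t \<le> x) * (max (x - s - t) 0 - max (x - s) 0) + t * of_bool (s \<le> x)))"
      by (simp add: algebra_simps)
    finally have eq: "T2 t - T2 0 - t * - P s = \<dots>" .
    have iE: "(\<lambda>x. p x * (of_bool (s + t \<le> x) * (max (x - s - t) 0 - max (x - s) 0) + t * of_bool (s \<le> x))) integrable_on {a..b}"
    proof -
      have "(\<lambda>x. of_bool (s + t \<le> x) * ((max (x - s - t) 0 - max (x - s) 0) * p x) + t * (of_bool (s \<le> x) * p x)) integrable_on {a..b}"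
        by (intro integrable_add i2 imult int_indp)
      then show ?thesis by (simp add: algebra_simps)
    qed
    have ib: "(\<lambda>x. Mp * \<bar>t\<bar> * of_bool (s - \<bar>t\<bar> \<le> x \<and> x \<le> s + \<bar>t\<bar>)) integrable_on {a..b}"
      by (rule bump_int(1)) (use Mp in auto)
    have "norm (integral {a..b} (\<lambda>x. p x * (of_bool (s + t \<le> x) * (max (x - s - t) 0 - max (x - s) 0) + t * of_bool (s \<le> x))))
        \<le> integral {a..b} (\<lambda>x. Mp * \<bar>t\<bar> * of_bool (s - \<bar>t\<bar> \<le> x \<and> x \<le> s + \<bar>t\<bar>))"
    proof (rule integral_norm_bound_integral[OF iE ib])
      fix x
      have "\<bar>p x\<bar> * \<bar>of_bool (s + t \<le> x) * (max (x - s - t) 0 - max (x - s) 0) + t * of_bool (s \<le> x)\<bar>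
          \<le> Mp * (\<bar>t\<bar> * of_bool (s - \<bar>t\<bar> \<le> x \<and> x \<le> s + \<bar>t\<bar>))"
        by (intro mult_mono ind_bump2) (use Mp pnn[of x] in auto)
      then show "norm (p x * (of_bool (s + t \<le> x) * (max (x - s - t) 0 - max (x - s) 0) + t * of_bool (s \<le> x)))
          \<le> Mp * \<bar>t\<bar> * of_bool (s - \<bar>t\<bar> \<le> x \<and> x \<le> s + \<bar>t\<bar>)"
        by (simp add: abs_mult mult.assoc)
    qed
    also have "\<dots> \<le> 2 * (Mp * \<bar>t\<bar>) * \<bar>t\<bar>"
      by (rule bump_int(2)) (use Mp in auto)
    finally show "\<bar>T2 t - T2 0 - t * - P s\<bar> \<le> 2 * Mp * t\<^sup>2"
      unfolding eq by (simp add: power2_eq_square)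
  qed
  have "((\<lambda>t. -2 * v$k * (T1 t + v$k * T2 t)) has_real_derivative -2 * v$k * (-(R \<theta> s * p s) + v$k * - P s)) (at 0)"
    by (intro DERIV_cmult DERIV_add D1 D2)
  moreover have "(\<lambda>t. d k (\<theta> + t *\<^sub>R axis k 1)) = (\<lambda>t. -2 * v$k * (T1 t + v$k * T2 t))"
    using F by blast
  moreover have "-2 * v$k * (-(R \<theta> s * p s) + v$k * - P s) = 2 * v$k * (R \<theta> s * p s) + 2 * (v$k)^2 * P s"
    by (simp add: algebra_simps power2_eq_square)
  ultimately show ?thesis by simp
qed

end


lemma quad_two:
  fixes H :: "real^'n^'n"
  assumes "i \<noteq> j"
  shows "(\<alpha> *\<^sub>R axis i 1 + \<beta> *\<^sub>R axis j 1) \<bullet> (H *v (\<alpha> *\<^sub>R axis i 1 + \<beta> *\<^sub>R axis j 1))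
    = \<alpha>^2 * H$i$i + \<alpha> * \<beta> * H$i$j + \<alpha> * \<beta> * H$j$i + \<beta>^2 * H$j$j"
proof -
  have "H *v (\<alpha> *\<^sub>R axis i 1 + \<beta> *\<^sub>R axis j 1) = \<alpha> *\<^sub>R (H *v axis i 1) + \<beta> *\<^sub>R (H *v axis j 1)"
    by (simp add: matrix_vector_right_distrib matrix_vector_mult_scaleR)
  moreover have e: "\<And>k l. axis k 1 \<bullet> (H *v axis l 1) = H$k$l"
    by (simp add: inner_axis' matrix_vector_mult_basis column_def)
  ultimately show ?thesis
    by (simp add: inner_add_left inner_add_right e power2_eq_square algebra_simps)
qed



theorem lemma3p4:
  fixes a b c :: real and v :: "real^'n" and f f' p :: "real \<Rightarrow> real"
    and G :: "real^'n \<Rightarrow> real^'n" and \<theta> :: "real^'n"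
  assumes b: "b > max a 0"
    and f_deriv: "\<And>x. (f has_real_derivative f' x) (at x)"
    and f'_cont: "continuous_on UNIV f'"
    and f'_pos: "\<And>x. f' x > 0"
    and fa: "f a = 0"
    and p_cont: "continuous_on UNIV p"
    and p_supp: "{x. p x \<noteq> 0} = {a<..<b}"
    and p_nonneg: "\<And>x. p x \<ge> 0"
    and v_pos: "\<And>j. v$j > 0"
    and G: "\<And>\<eta>. lossL c v f p differentiable (at \<eta>) \<Longrightarrow> G \<eta> = - grad (lossL c v f p) \<eta>"
    and crit: "G \<theta> = 0"
    and not_desc: "\<not> descending_critical_point (lossL c v f p) \<theta>"
  shows "\<forall>j. a < \<theta>$j \<and> \<theta>$j < b \<and> NN c v \<theta> (\<theta>$j) < f (\<theta>$j)
           \<longrightarrow> {i \<in> UNIV - {j}. \<theta>$i = \<theta>$j} = {}"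
proof (intro allI impI)
  fix j assume hj: "a < \<theta>$j \<and> \<theta>$j < b \<and> NN c v \<theta> (\<theta>$j) < f (\<theta>$j)"
  define s where "s = \<theta>$j"
  have as: "a < s" "s < b" and Ns: "NN c v \<theta> s < f s" using hj by (auto simp: s_def)
  have fc: "continuous_on UNIV f"
    using f_deriv by (intro continuous_at_imp_continuous_on) (auto intro: DERIV_continuous)
  have p0: "\<And>x. x \<notin> {a<..<b} \<Longrightarrow> p x = 0" using p_supp by blast
  interpret S: setting a b c v f p
    by unfold_locales (use b fc p_cont p0 p_nonneg in auto)
  show "{i \<in> UNIV - {j}. \<theta>$i = \<theta>$j} = {}"
  proof (rule ccontr)
    assume "{i \<in> UNIV - {j}. \<theta>$i = \<theta>$j} \<noteq> {}"
    then obtain i where ij: "i \<noteq> j" and iss: "\<theta>$i = s" unfolding s_def by blast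
    have js: "\<theta>$j = s" by (simp add: s_def)
    let ?L = "lossL c v f p"
    have "?L differentiable (at \<theta>)"
      using S.L_deriv unfolding differentiable_def by blast
    then have grad0: "grad ?L \<theta> = 0" using G crit by simp
    have Hent: "Hess ?L \<theta> $ k $ l = deriv (\<lambda>t. S.d l (\<theta> + t *\<^sub>R axis k 1)) 0" for k l
      unfolding Hess_def S.partial_L_fun by (simp add: partial_def)
    define g where "g = S.R \<theta> s * p s"
    have ps: "p s > 0"
    proof -
      have "s \<in> {x. p x \<noteq> 0}" unfolding p_supp using as by simp
      then have "p s \<noteq> 0" by simp
      then show ?thesis using p_nonneg[of s] by linarith
    qed
    have g: "g < 0" unfolding g_def S.R_def using Ns ps by (simp add: mult_neg_pos)
    define H where "H = Hess ?L \<theta>"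
    have Hii: "H$i$i = 2 * v$i * g + 2 * (v$i)^2 * S.P s"
      unfolding H_def Hent g_def by (rule DERIV_imp_deriv, rule S.H_diag) (use iss as in auto)
    have Hjj: "H$j$j = 2 * v$j * g + 2 * (v$j)^2 * S.P s"
      unfolding H_def Hent g_def by (rule DERIV_imp_deriv, rule S.H_diag) (use js as in auto)
    have Hij: "H$i$j = 2 * v$j * v$i * S.P s"
      unfolding H_def Hent by (rule DERIV_imp_deriv, rule S.H_off) (use iss js ij in auto)
    have Hji: "H$j$i = 2 * v$i * v$j * S.P s"
      unfolding H_def Hent by (rule DERIV_imp_deriv, rule S.H_off) (use iss js ij in auto)
    define u where "u = (1 / v$i) *\<^sub>R axis i (1::real) + (- 1 / v$j) *\<^sub>R axis j 1"
    have vi: "v$i > 0" and vj: "v$j > 0" using v_pos by auto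
    have "u \<bullet> (H *v u) = 2 * g * (1 / v$i + 1 / v$j)"
      unfolding u_def quad_two[OF ij] Hii Hjj Hij Hji using vi vj
      by (simp add: field_simps power2_eq_square)
    also have "\<dots> < 0"
    proof -
      have "1 / v$i + 1 / v$j > 0" using vi vj by (intro add_pos_pos) auto
      then show ?thesis using g by (simp add: mult_neg_pos)
    qed
    finally have "u \<bullet> (Hess ?L \<theta> *v u) < 0" unfolding H_def .
    then have "descending_critical_point ?L \<theta>"
      unfolding descending_critical_point_def using grad0 by blast
    then show False using not_desc by contradiction
  qed
qed


end
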